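(* Let $T$ be a tree. Then $\mathcal{Z}^{\mathrm{TE}}_-(T)$ is connected.
   Context: Skew forcing: vertices are colored blue or white; if any vertex $u$ (blue or white) has exactly one white neighbor $v$, then $u$ may force $v$ to become blue. A skew forcing set is a (possibly empty) set of initially blue vertices from which repeated application of this rule turns every vertex blue; $\mathrm{Z}_-(G)$ is the minimum size of a skew forcing set. $\mathcal{Z}^{\mathrm{TE}}_-(G)$ has as vertices the minimum skew forcing sets of $G$, with $S_1S_2$ an edge iff $S_1\setminus S_2=\{v_1\}$ and $S_2\setminus S_1=\{v_2\}$ for some vertices $v_1,v_2$. *)

theory Defs
  imports Main
begin

definition simple_graph :: "'a set \<Rightarrow> ('a \<Rightarrow> 'a \<Rightarrow> bool) \<Rightarrow> bool" where
  "simple_graph V E \<longleftrightarrow> finite V \<and>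
     (\<forall>u v. E u v \<longrightarrow> u \<in> V \<and> v \<in> V) \<and>
     (\<forall>u v. E u v \<longrightarrow> E v u) \<and> (\<forall>v. \<not> E v v)"

definition graph_connected :: "'a set \<Rightarrow> ('a \<Rightarrow> 'a \<Rightarrow> bool) \<Rightarrow> bool" where
  "graph_connected V E \<longleftrightarrow> V \<noteq> {} \<and>
     (\<forall>x\<in>V. \<forall>y\<in>V. (\<lambda>a b. a \<in> V \<and> b \<in> V \<and> E a b)\<^sup>*\<^sup>* x y)"

definition is_cycle :: "'a set \<Rightarrow> ('a \<Rightarrow> 'a \<Rightarrow> bool) \<Rightarrow> 'a list \<Rightarrow> bool" where
  "is_cycle V E cs \<longleftrightarrow> length cs \<ge> 3 \<and> distinct cs \<and> set cs \<subseteq> V \<and>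
     (\<forall>i. Suc i < length cs \<longrightarrow> E (cs ! i) (cs ! Suc i)) \<and> E (last cs) (hd cs)"

definition is_tree :: "'a set \<Rightarrow> ('a \<Rightarrow> 'a \<Rightarrow> bool) \<Rightarrow> bool" where
  "is_tree V E \<longleftrightarrow> simple_graph V E \<and> graph_connected V E \<and> (\<nexists>cs. is_cycle V E cs)"

text \<open>Skew forcing rule: u (blue or white) has exactly one white neighbor v; then u forces v.\<close>
definition skew_force :: "'a set \<Rightarrow> ('a \<Rightarrow> 'a \<Rightarrow> bool) \<Rightarrow> 'a set \<Rightarrow> 'a \<Rightarrow> 'a \<Rightarrow> bool" where
  "skew_force V E B u v \<longleftrightarrow> u \<in> V \<and> v \<in> V \<and> v \<notin> B \<and> E u v \<and>
     (\<forall>w. w \<in> V \<and> w \<notin> B \<and> E u w \<longrightarrow> w = v)"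

definition skew_step :: "'a set \<Rightarrow> ('a \<Rightarrow> 'a \<Rightarrow> bool) \<Rightarrow> 'a set \<Rightarrow> 'a set \<Rightarrow> bool" where
  "skew_step V E B B' \<longleftrightarrow> (\<exists>u v. skew_force V E B u v \<and> B' = insert v B)"

definition skew_forcing_set :: "'a set \<Rightarrow> ('a \<Rightarrow> 'a \<Rightarrow> bool) \<Rightarrow> 'a set \<Rightarrow> bool" where
  "skew_forcing_set V E S \<longleftrightarrow> S \<subseteq> V \<and> (skew_step V E)\<^sup>*\<^sup>* S V"

definition skew_zero_forcing_number :: "'a set \<Rightarrow> ('a \<Rightarrow> 'a \<Rightarrow> bool) \<Rightarrow> nat" where
  "skew_zero_forcing_number V E = (LEAST k. \<exists>S. skew_forcing_set V E S \<and> card S = k)"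

definition min_skew_forcing_set :: "'a set \<Rightarrow> ('a \<Rightarrow> 'a \<Rightarrow> bool) \<Rightarrow> 'a set \<Rightarrow> bool" where
  "min_skew_forcing_set V E S \<longleftrightarrow> skew_forcing_set V E S \<and> card S = skew_zero_forcing_number V E"

definition skew_TE_vertices :: "'a set \<Rightarrow> ('a \<Rightarrow> 'a \<Rightarrow> bool) \<Rightarrow> 'a set set" where
  "skew_TE_vertices V E = {S. min_skew_forcing_set V E S}"

definition skew_TE_adj :: "'a set \<Rightarrow> 'a set \<Rightarrow> bool" where
  "skew_TE_adj S1 S2 \<longleftrightarrow> (\<exists>v1 v2. S1 - S2 = {v1} \<and> S2 - S1 = {v2})"

end

theory Submission
  imports Defs
begin

definition mtch :: "('a \<Rightarrow> 'a \<Rightarrow> bool) \<Rightarrow> ('a \<Rightarrow> 'a \<Rightarrow> bool) \<Rightarrow> bool" where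
  "mtch E m \<longleftrightarrow> (\<forall>a b. m a b \<longrightarrow> E a b) \<and> (\<forall>a b. m a b \<longrightarrow> m b a) \<and> (\<forall>a b c. m a b \<longrightarrow> m a c \<longrightarrow> b = c)"

definition cov :: "('a \<Rightarrow> 'a \<Rightarrow> bool) \<Rightarrow> 'a set" where
  "cov m = {a. \<exists>b. m a b}"

definition addm :: "('a \<Rightarrow> 'a \<Rightarrow> bool) \<Rightarrow> 'a \<Rightarrow> 'a \<Rightarrow> 'a \<Rightarrow> 'a \<Rightarrow> bool" where
  "addm m u v = (\<lambda>a b. (m a b \<and> a \<noteq> u \<and> a \<noteq> v \<and> b \<noteq> u \<and> b \<noteq> v) \<or> (a = u \<and> b = v) \<or> (a = v \<and> b = u))"

definition fstep :: "'a set \<Rightarrow> ('a \<Rightarrow> 'a \<Rightarrow> bool) \<Rightarrow> 'a set \<Rightarrow> 'a set \<Rightarrow> 'a set \<Rightarrow> bool" where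
  "fstep V E W X Y \<longleftrightarrow> (\<exists>u v. u \<in> W \<and> skew_force V E X u v \<and> Y = insert v X)"

lemma mtch_addm: "mtch E m \<Longrightarrow> E u v \<Longrightarrow> E v u \<Longrightarrow> u \<noteq> v \<Longrightarrow> mtch E (addm m u v)"
  unfolding mtch_def addm_def by blast

lemma cov_sub: "simple_graph V E \<Longrightarrow> mtch E m \<Longrightarrow> cov m \<subseteq> V"
  unfolding simple_graph_def mtch_def cov_def by blast

lemma lower:
  assumes sg: "simple_graph V E" and r: "(skew_step V E)\<^sup>*\<^sup>* B V"
  shows "\<exists>m. mtch E m \<and> V - B \<subseteq> cov m"
  using r
proof (induction rule: converse_rtranclp_induct)
  case base
  show ?case by (rule exI[of _ "\<lambda>_ _. False"]) (simp add: mtch_def)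
next
  case (step B B')
  then obtain m' where m': "mtch E m'" "V - B' \<subseteq> cov m'" by blast
  from step(1) obtain u v where f: "skew_force V E B u v" and B': "B' = insert v B"
    unfolding skew_step_def by blast
  show ?case
  proof (cases "v \<in> cov m'")
    case True
    then show ?thesis using m' B' by blast
  next
    case False
    have Euv: "E u v" "E v u" "u \<noteq> v" using f sg unfolding skew_force_def simple_graph_def by blast+
    have "V - B \<subseteq> cov (addm m' u v)"
    proof
      fix a assume a: "a \<in> V - B"
      show "a \<in> cov (addm m' u v)"
      proof (cases "a = u \<or> a = v")
        case True then show ?thesis unfolding cov_def addm_def by blast
      next
        case na: False
        then have "a \<in> cov m'" using a m' B' by blast
        then obtain b where b: "m' a b" unfolding cov_def by blast
        have "b \<noteq> v" using b False m'(1) unfolding mtch_def cov_def by blast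
        moreover have "b \<noteq> u"
        proof
          assume "b = u"
          then have "E u a" using b m'(1) unfolding mtch_def by blast
          then show False using f a na unfolding skew_force_def by blast
        qed
        ultimately show ?thesis using b na unfolding cov_def addm_def by blast
      qed
    qed
    then show ?thesis using mtch_addm[OF m'(1) Euv] by blast
  qed
qed

lemma leaf_exists:
  assumes sg: "simple_graph V E" and nc: "\<nexists>cs. is_cycle V E cs"
    and W: "W \<subseteq> V" "W \<noteq> {}" and nb: "\<And>w. w \<in> W \<Longrightarrow> \<exists>y\<in>W. E w y"
  shows "\<exists>l\<in>W. \<exists>p\<in>W. E l p \<and> (\<forall>y\<in>W. E l y \<longrightarrow> y = p)"
proof (rule ccontr)
  assume na: "\<not> ?thesis"
  have fin: "finite W" using sg W unfolding simple_graph_def by (meson finite_subset)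
  define P where "P = {xs. xs \<noteq> [] \<and> distinct xs \<and> set xs \<subseteq> W \<and>
      (\<forall>i. Suc i < length xs \<longrightarrow> E (xs!i) (xs!Suc i))}"
  have bnd: "length xs \<le> card W" if "xs \<in> P" for xs
  proof -
    have "distinct xs" "set xs \<subseteq> W" using that unfolding P_def by simp_all
    then show ?thesis using fin by (metis card_mono distinct_card)
  qed
  have finL: "finite (length ` P)"
    by (rule finite_subset[of _ "{..card W}"]) (use bnd in auto)
  obtain w where "w \<in> W" using W by blast
  then have "[w] \<in> P" unfolding P_def by auto
  then have neL: "length ` P \<noteq> {}" by blast
  obtain xs where xs: "xs \<in> P" "length xs = Max (length ` P)"
    using Max_in[OF finL neL] by auto
  have maxl: "length ys \<le> length xs" if "ys \<in> P" for ys
    using xs(2) Max_ge[OF finL] that by auto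
  obtain x rest where xr: "xs = x # rest" using xs(1) unfolding P_def by (cases xs) auto
  have xW: "x \<in> W" using xs(1) xr unfolding P_def by auto
  have irr: "\<And>a. \<not> E a a" and sym: "\<And>a b. E a b \<Longrightarrow> E b a"
    using sg unfolding simple_graph_def by blast+
  have ext: False if y: "y \<in> W" "E x y" "y \<notin> set xs" for y
  proof -
    have "y # xs \<in> P"
    proof -
      have xsP: "distinct xs" "set xs \<subseteq> W" "\<forall>i. Suc i < length xs \<longrightarrow> E (xs!i) (xs!Suc i)"
        using xs(1) unfolding P_def by simp_all
      have "\<forall>i. Suc i < length (y # xs) \<longrightarrow> E ((y # xs)!i) ((y # xs)!Suc i)"
      proof (intro allI impI)
        fix i assume i: "Suc i < length (y # xs)"
        show "E ((y # xs)!i) ((y # xs)!Suc i)"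
        proof (cases i)
          case 0 then show ?thesis using sym[OF y(2)] xr by simp
        next
          case (Suc k) then show ?thesis using xsP(3) i by simp
        qed
      qed
      then show ?thesis using xsP y unfolding P_def by simp
    qed
    then show False using maxl by fastforce
  qed
  obtain y1 where y1: "y1 \<in> W" "E x y1" using nb[OF xW] by blast
  show False
  proof (cases rest)
    case Nil
    then have "y1 \<notin> set xs" using xr irr y1 by auto
    then show False using ext y1 by blast
  next
    case (Cons z rest')
    obtain y2 where y2: "y2 \<in> W" "E x y2" "y2 \<noteq> y1"
      using na xW y1 by blast
    obtain y where y: "y \<in> W" "E x y" "y \<noteq> z"
      using y1 y2 by (cases "y1 = z") blast+
    show False
    proof (cases "y \<in> set xs")
      case False then show False using ext y by blast
    next
      case True
      then obtain j where j: "j < length xs" "xs ! j = y" by (metis in_set_conv_nth)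
      have "j \<noteq> 0" using j(2) xr irr y(2) by (metis nth_Cons_0)
      moreover have "j \<noteq> 1" using j xr Cons y by auto
      ultimately have j2: "j \<ge> 2" by auto
      define cs where "cs = take (Suc j) xs"
      have "is_cycle V E cs"
        unfolding is_cycle_def
      proof (intro conjI allI impI)
        show "3 \<le> length cs" using j j2 unfolding cs_def by auto
        have xsP: "distinct xs" "set xs \<subseteq> W" using xs(1) unfolding P_def by simp_all
        show "distinct cs" using xsP unfolding cs_def by simp
        show "set cs \<subseteq> V" using xsP W unfolding cs_def by (meson order_trans set_take_subset)
        show "E (cs ! i) (cs ! Suc i)" if "Suc i < length cs" for i
        proof -
          have "Suc i < length xs" "Suc i < Suc j" using that unfolding cs_def by auto
          then show ?thesis using xs(1) unfolding cs_def P_def by simp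
        qed
        have "last cs = y" using j unfolding cs_def by (simp add: take_Suc_conv_app_nth)
        moreover have "hd cs = x" using xr unfolding cs_def by simp
        ultimately show "E (last cs) (hd cs)" using sym[OF y(2)] by simp
      qed
      then show False using nc by blast
    qed
  qed
qed

lemma fstep_mono: assumes "X \<subseteq> W" "(fstep V E X)\<^sup>*\<^sup>* A B" shows "(fstep V E W)\<^sup>*\<^sup>* A B"
proof -
  have le: "fstep V E X \<le> fstep V E W" using assms(1) unfolding fstep_def by blast
  show ?thesis using rtranclp_mono[OF le] assms(2) by (metis predicate2D)
qed

lemma fstep_incr: "(fstep V E W)\<^sup>*\<^sup>* A B \<Longrightarrow> A \<subseteq> B"
  by (induction rule: rtranclp_induct) (auto simp: fstep_def)

lemma fstep_skew: assumes "(fstep V E W)\<^sup>*\<^sup>* A B" shows "(skew_step V E)\<^sup>*\<^sup>* A B"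
proof -
  have le: "fstep V E W \<le> skew_step V E" unfolding fstep_def skew_step_def by blast
  show ?thesis using rtranclp_mono[OF le] assms by (metis predicate2D)
qed

lemma fstep_transfer:
  assumes r: "(fstep V E W)\<^sup>*\<^sup>* X Y" and l: "l \<in> X" and nadj: "\<And>u. u \<in> W \<Longrightarrow> \<not> E u l"
  shows "(fstep V E W)\<^sup>*\<^sup>* (X - {l}) (Y - {l})"
  using r
proof (induction rule: rtranclp_induct)
  case base then show ?case by simp
next
  case (step Y Z)
  have lY: "l \<in> Y" using fstep_incr[OF step(1)] l by blast
  from step(2) obtain u v where u: "u \<in> W" and f: "skew_force V E Y u v" and Z: "Z = insert v Y"
    unfolding fstep_def by blast
  have vl: "v \<noteq> l" using f lY unfolding skew_force_def by blast
  have "skew_force V E (Y - {l}) u v"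
    using f nadj[OF u] unfolding skew_force_def by blast
  moreover have "Z - {l} = insert v (Y - {l})" using Z vl by blast
  ultimately have "fstep V E W (Y - {l}) (Z - {l})" using u unfolding fstep_def by blast
  then show ?case using step(3) by simp
qed

lemma upper:
  assumes sg: "simple_graph V E" and nc: "\<nexists>cs. is_cycle V E cs"
  shows "mtch E m \<Longrightarrow> (fstep V E (cov m))\<^sup>*\<^sup>* (V - cov m) V"
proof (induction "card (cov m)" arbitrary: m rule: less_induct)
  case less
  have irr: "\<And>a. \<not> E a a" and sym: "\<And>a b. E a b \<Longrightarrow> E b a"
    using sg unfolding simple_graph_def by blast+
  have WV: "cov m \<subseteq> V" using cov_sub[OF sg less.prems] .
  have finV: "finite V" using sg unfolding simple_graph_def by blast
  have finW: "finite (cov m)" using WV finV finite_subset by blast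
  have mE: "\<And>a b. m a b \<Longrightarrow> E a b" and msym: "\<And>a b. m a b \<Longrightarrow> m b a"
    and mfun: "\<And>a b c. m a b \<Longrightarrow> m a c \<Longrightarrow> b = c"
    using less.prems unfolding mtch_def by blast+
  show ?case
  proof (cases "cov m = {}")
    case True then show ?thesis by simp
  next
    case False
    have nb: "\<exists>y\<in>cov m. E w y" if w: "w \<in> cov m" for w
    proof -
      obtain b where "m w b" using w unfolding cov_def by blast
      then show ?thesis using mE msym unfolding cov_def by blast
    qed
    obtain l p where lp: "l \<in> cov m" "p \<in> cov m" "E l p" and uniq: "\<And>y. y \<in> cov m \<Longrightarrow> E l y \<Longrightarrow> y = p"
      using leaf_exists[OF sg nc WV False nb] by blast
    obtain q where q: "m l q" using lp(1) unfolding cov_def by blast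
    have "q \<in> cov m" using q msym unfolding cov_def by blast
    then have mlp: "m l p" using q uniq mE by metis
    have lpne: "l \<noteq> p" using lp irr by blast
    define m' where "m' = (\<lambda>a b. m a b \<and> a \<noteq> l \<and> a \<noteq> p \<and> b \<noteq> l \<and> b \<noteq> p)"
    have m'm: "mtch E m'" using less.prems unfolding m'_def mtch_def by blast
    have covm': "cov m' = cov m - {l, p}"
    proof
      show "cov m' \<subseteq> cov m - {l, p}" unfolding m'_def cov_def by blast
      show "cov m - {l, p} \<subseteq> cov m'"
      proof
        fix a assume a: "a \<in> cov m - {l, p}"
        then obtain b where b: "m a b" unfolding cov_def by blast
        have "b \<noteq> l"
        proof
          assume "b = l" then have "m l a" using b msym by blast
          then show False using mfun[OF mlp] a by blast
        qed
        moreover have "b \<noteq> p"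
        proof
          assume "b = p" then have "m p a" using b msym by blast
          moreover have "m p l" using msym[OF mlp] .
          ultimately show False using mfun a by blast
        qed
        ultimately show "a \<in> cov m'" using a b unfolding m'_def cov_def by blast
      qed
    qed
    have "card (cov m') < card (cov m)"
      using covm' finW lp by (metis Diff_insert2 card_Diff2_less)
    then have IH: "(fstep V E (cov m'))\<^sup>*\<^sup>* (V - cov m') V" using less.hyps m'm by blast
    have nadj: "\<not> E u l" if "u \<in> cov m'" for u
      using that covm' uniq sym by blast
    have "(fstep V E (cov m'))\<^sup>*\<^sup>* ((V - cov m') - {l}) (V - {l})"
      using fstep_transfer[OF IH _ nadj] lp WV covm' by blast
    moreover have "(V - cov m') - {l} = insert p (V - cov m)" using covm' lp WV lpne by blast
    ultimately have mid: "(fstep V E (cov m))\<^sup>*\<^sup>* (insert p (V - cov m)) (V - {l})"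
      using fstep_mono[of "cov m'" "cov m"] covm' by auto
    have first: "fstep V E (cov m) (V - cov m) (insert p (V - cov m))"
      unfolding fstep_def skew_force_def using lp WV uniq by blast
    have last: "fstep V E (cov m) (V - {l}) V"
      unfolding fstep_def skew_force_def
      apply (rule exI[of _ p], rule exI[of _ l])
      using lp WV sym by blast
    show ?thesis using first mid last
      by (meson converse_rtranclp_into_rtranclp rtranclp.rtrancl_into_rtrancl)
  qed
qed

definition mxK :: "'a set \<Rightarrow> ('a \<Rightarrow> 'a \<Rightarrow> bool) \<Rightarrow> nat" where
  "mxK V E = Max ((\<lambda>m. card (cov m)) ` {m. mtch E m})"

lemma mxK_props:
  assumes sg: "simple_graph V E"
  shows "\<And>m. mtch E m \<Longrightarrow> card (cov m) \<le> mxK V E"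
    and "\<exists>m. mtch E m \<and> card (cov m) = mxK V E"
proof -
  have finV: "finite V" using sg unfolding simple_graph_def by blast
  let ?A = "(\<lambda>m. card (cov m)) ` {m. mtch E m}"
  have "?A \<subseteq> {..card V}" using cov_sub[OF sg] finV by (auto intro: card_mono)
  then have fin: "finite ?A" using finite_subset by blast
  have "(\<lambda>_ _. False) \<in> {m. mtch E m}" by (simp add: mtch_def)
  then have ne: "?A \<noteq> {}" by blast
  show "\<And>m. mtch E m \<Longrightarrow> card (cov m) \<le> mxK V E"
    unfolding mxK_def using Max_ge[OF fin] by blast
  show "\<exists>m. mtch E m \<and> card (cov m) = mxK V E"
    unfolding mxK_def using Max_in[OF fin ne] by auto
qed

lemma zf_val:
  assumes sg: "simple_graph V E" and nc: "\<nexists>cs. is_cycle V E cs"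
  shows "skew_zero_forcing_number V E = card V - mxK V E"
proof -
  have finV: "finite V" using sg unfolding simple_graph_def by blast
  obtain m0 where m0: "mtch E m0" "card (cov m0) = mxK V E" using mxK_props(2)[OF sg] by blast
  have f0: "skew_forcing_set V E (V - cov m0)"
    unfolding skew_forcing_set_def using fstep_skew[OF upper[OF sg nc m0(1)]] by blast
  have c0: "card (V - cov m0) = card V - mxK V E"
    using m0 cov_sub[OF sg m0(1)] finV by (simp add: card_Diff_subset finite_subset)
  have lb: "card V - mxK V E \<le> card S" if "skew_forcing_set V E S" for S
  proof -
    have SV: "S \<subseteq> V" and r: "(skew_step V E)\<^sup>*\<^sup>* S V" using that unfolding skew_forcing_set_def by blast+
    obtain m where m: "mtch E m" "V - S \<subseteq> cov m" using lower[OF sg r] by blast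
    have "card (V - S) \<le> card (cov m)" using m cov_sub[OF sg m(1)] finV by (meson card_mono finite_subset)
    also have "\<dots> \<le> mxK V E" using mxK_props(1)[OF sg m(1)] .
    finally show ?thesis using SV finV by (simp add: card_Diff_subset finite_subset)
  qed
  show ?thesis unfolding skew_zero_forcing_number_def
    by (rule Least_equality) (use f0 c0 lb in auto)
qed

lemma min_char:
  assumes sg: "simple_graph V E" and nc: "\<nexists>cs. is_cycle V E cs"
  shows "S \<in> skew_TE_vertices V E \<longleftrightarrow> (\<exists>m. mtch E m \<and> card (cov m) = mxK V E \<and> S = V - cov m)"
proof
  have finV: "finite V" using sg unfolding simple_graph_def by blast
  assume "S \<in> skew_TE_vertices V E"
  then have S: "skew_forcing_set V E S" "card S = card V - mxK V E"
    unfolding skew_TE_vertices_def min_skew_forcing_set_def using zf_val[OF sg nc] by auto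
  have SV: "S \<subseteq> V" and r: "(skew_step V E)\<^sup>*\<^sup>* S V" using S(1) unfolding skew_forcing_set_def by blast+
  obtain m where m: "mtch E m" "V - S \<subseteq> cov m" using lower[OF sg r] by blast
  have cm: "cov m \<subseteq> V" "finite (cov m)" using cov_sub[OF sg m(1)] finV finite_subset by blast+
  have K: "card (cov m) \<le> mxK V E" using mxK_props(1)[OF sg m(1)] .
  obtain m0 where m0: "mtch E m0" "card (cov m0) = mxK V E" using mxK_props(2)[OF sg] by blast
  have Kle: "mxK V E \<le> card V" using card_mono[OF finV cov_sub[OF sg m0(1)]] m0(2) by simp
  have "card (V - S) = card V - card S" using SV finV by (simp add: card_Diff_subset finite_subset)
  then have "card (V - S) = mxK V E" using S(2) Kle by linarith
  then have eq: "V - S = cov m" using card_subset_eq[OF cm(2) m(2)] K card_mono[OF cm(2) m(2)] by linarith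
  then show "\<exists>m. mtch E m \<and> card (cov m) = mxK V E \<and> S = V - cov m"
  proof (intro exI conjI)
    show "mtch E m" by (rule m(1))
    show "card (cov m) = mxK V E" using eq \<open>card (V - S) = mxK V E\<close> by simp
    show "S = V - cov m" using eq SV by blast
  qed
next
  have finV: "finite V" using sg unfolding simple_graph_def by blast
  assume "\<exists>m. mtch E m \<and> card (cov m) = mxK V E \<and> S = V - cov m"
  then obtain m where m: "mtch E m" "card (cov m) = mxK V E" "S = V - cov m" by blast
  have f0: "skew_forcing_set V E S"
    unfolding skew_forcing_set_def m(3) using fstep_skew[OF upper[OF sg nc m(1)]] by blast
  have c0: "card S = card V - mxK V E"
    using m cov_sub[OF sg m(1)] finV by (simp add: card_Diff_subset finite_subset)
  show "S \<in> skew_TE_vertices V E"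
    unfolding skew_TE_vertices_def min_skew_forcing_set_def using f0 c0 zf_val[OF sg nc] by simp
qed

lemma conn_aux:
  assumes sg: "simple_graph V E" and nc: "\<nexists>cs. is_cycle V E cs"
  shows "mtch E m1 \<Longrightarrow> card (cov m1) = mxK V E \<Longrightarrow> mtch E m2 \<Longrightarrow> card (cov m2) = mxK V E \<Longrightarrow>
    (\<lambda>a b. a \<in> skew_TE_vertices V E \<and> b \<in> skew_TE_vertices V E \<and> skew_TE_adj a b)\<^sup>*\<^sup>* (V - cov m1) (V - cov m2)"
proof (induction "card {(a, b). m1 a b \<noteq> m2 a b}" arbitrary: m2 rule: less_induct)
  case less
  let ?T = "skew_TE_vertices V E"
  let ?R = "\<lambda>a b. a \<in> ?T \<and> b \<in> ?T \<and> skew_TE_adj a b"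
  have finV: "finite V" using sg unfolding simple_graph_def by blast
  have irr: "\<And>a. \<not> E a a" and sym: "\<And>a b. E a b \<Longrightarrow> E b a"
    using sg unfolding simple_graph_def by blast+
  have m1E: "\<And>a b. m1 a b \<Longrightarrow> E a b" and m1sym: "\<And>a b. m1 a b \<Longrightarrow> m1 b a"
    and m1fun: "\<And>a b c. m1 a b \<Longrightarrow> m1 a c \<Longrightarrow> b = c"
    using less.prems(1) unfolding mtch_def by blast+
  have m2E: "\<And>a b. m2 a b \<Longrightarrow> E a b" and m2sym: "\<And>a b. m2 a b \<Longrightarrow> m2 b a"
    and m2fun: "\<And>a b c. m2 a b \<Longrightarrow> m2 a c \<Longrightarrow> b = c"
    using less.prems(3) unfolding mtch_def by blast+
  have c1: "cov m1 \<subseteq> V" "finite (cov m1)" using cov_sub[OF sg less.prems(1)] finV finite_subset by blast+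
  have c2: "cov m2 \<subseteq> V" "finite (cov m2)" using cov_sub[OF sg less.prems(3)] finV finite_subset by blast+
  show ?case
  proof (cases "cov m1 \<subseteq> cov m2")
    case True
    then have "cov m1 = cov m2" using card_subset_eq[OF c2(2) True] less.prems by simp
    then show ?thesis by simp
  next
    case False
    then obtain x where x: "x \<in> cov m1" "x \<notin> cov m2" by blast
    then obtain x1 where x1: "m1 x x1" unfolding cov_def by blast
    have xx1: "x \<noteq> x1" "E x x1" "E x1 x" using m1E[OF x1] irr sym by blast+
    have "x1 \<in> cov m2"
    proof (rule ccontr)
      assume nx1: "x1 \<notin> cov m2"
      have "insert x (insert x1 (cov m2)) \<subseteq> cov (addm m2 x x1)"
      proof
        fix a assume a: "a \<in> insert x (insert x1 (cov m2))"
        show "a \<in> cov (addm m2 x x1)"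
        proof (cases "a = x \<or> a = x1")
          case True then show ?thesis unfolding addm_def cov_def by blast
        next
          case False
          then obtain b where b: "m2 a b" using a unfolding cov_def by blast
          have "b \<noteq> x" "b \<noteq> x1" using m2sym[OF b] x(2) nx1 unfolding cov_def by blast+
          then show ?thesis using b False unfolding addm_def cov_def by blast
        qed
      qed
      moreover have "card (insert x (insert x1 (cov m2))) = card (cov m2) + 2"
        using x nx1 xx1 c2 by simp
      moreover have "finite (cov (addm m2 x x1))"
        using cov_sub[OF sg mtch_addm[OF less.prems(3) xx1(2,3,1)]] finV finite_subset by blast
      ultimately have "card (cov m2) + 2 \<le> card (cov (addm m2 x x1))" by (metis card_mono)
      then show False using mxK_props(1)[OF sg mtch_addm[OF less.prems(3) xx1(2,3,1)]] less.prems(4) by simp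
    qed
    then obtain x2 where x2: "m2 x1 x2" unfolding cov_def by blast
    have x2x: "x2 \<noteq> x" using x2 m2sym x unfolding cov_def by blast
    have x12: "x1 \<noteq> x2" using m2E[OF x2] irr by blast
    define m3 where "m3 = addm m2 x x1"
    have m3m: "mtch E m3" unfolding m3_def by (rule mtch_addm[OF less.prems(3) xx1(2,3,1)])
    have cov3: "cov m3 = insert x (cov m2 - {x2})"
    proof
      show "cov m3 \<subseteq> insert x (cov m2 - {x2})"
      proof
        fix a assume "a \<in> cov m3"
        then obtain b where b: "m3 a b" unfolding cov_def by blast
        show "a \<in> insert x (cov m2 - {x2})"
        proof (cases "a = x \<or> a = x1")
          case True then show ?thesis using x2 x12 unfolding cov_def by blast
        next
          case False
          then have mb: "m2 a b" "b \<noteq> x1" using b unfolding m3_def addm_def by blast+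
          have "a \<noteq> x2"
          proof
            assume "a = x2"
            then have "m2 a x1" using m2sym[OF x2] by simp
            then show False using m2fun[OF mb(1)] mb(2) by blast
          qed
          then show ?thesis using mb unfolding cov_def by blast
        qed
      qed
      show "insert x (cov m2 - {x2}) \<subseteq> cov m3"
      proof
        fix a assume a: "a \<in> insert x (cov m2 - {x2})"
        show "a \<in> cov m3"
        proof (cases "a = x \<or> a = x1")
          case True then show ?thesis unfolding m3_def addm_def cov_def by blast
        next
          case False
          then obtain b where b: "m2 a b" using a unfolding cov_def by blast
          have "b \<noteq> x" using b m2sym x unfolding cov_def by blast
          moreover have "b \<noteq> x1"
          proof
            assume "b = x1"
            then have "m2 x1 a" using m2sym[OF b] by simp
            then have "a = x2" using m2fun[OF x2] by blast
            then show False using a False by blast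
          qed
          ultimately show ?thesis using b False unfolding m3_def addm_def cov_def by blast
        qed
      qed
    qed
    have x2c: "x2 \<in> cov m2" using x2 m2sym unfolding cov_def by blast
    have pos: "card (cov m2) > 0" using x2c c2(2) card_gt_0_iff by blast
    have card3: "card (cov m3) = mxK V E"
      using cov3 c2 x x2c less.prems(4) pos by (simp add: card_insert_if)
    define D where "D = {(a, b). m1 a b \<noteq> m2 a b}"
    have DV: "D \<subseteq> V \<times> V"
    proof
      fix ab assume "ab \<in> D"
      then obtain a b where ab: "ab = (a, b)" "m1 a b \<or> m2 a b" unfolding D_def by blast
      then have "E a b" using m1E m2E by blast
      then show "ab \<in> V \<times> V" using sg ab(1) unfolding simple_graph_def by blast
    qed
    have sub: "{(a, b). m1 a b \<noteq> m3 a b} \<subseteq> D - {(x, x1)}"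
    proof
      fix ab assume "ab \<in> {(a, b). m1 a b \<noteq> m3 a b}"
      then obtain a b where ab: "ab = (a, b)" "m1 a b \<noteq> m3 a b" by blast
      have "m1 a b \<noteq> m2 a b"
      proof
        assume eq: "m1 a b = m2 a b"
        then have ne: "m3 a b \<noteq> m2 a b" using ab by simp
        show False
        proof (cases "m2 a b")
          case True
          then have "a \<noteq> x" "b \<noteq> x" using x m2sym unfolding cov_def by blast+
          moreover have "\<not> (m2 a b \<and> a \<noteq> x \<and> a \<noteq> x1 \<and> b \<noteq> x \<and> b \<noteq> x1)"
            using ne True unfolding m3_def addm_def by blast
          ultimately have "a = x1 \<or> b = x1" using True by blast
          then have "(a = x1 \<and> b = x2) \<or> (a = x2 \<and> b = x1)" using True m2fun m2sym x2 by blast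
          then have "m1 x1 x2" using eq True m1sym by blast
          then show False using m1fun[OF m1sym[OF x1]] x2x by blast
        next
          case False
          then have "(a = x \<and> b = x1) \<or> (a = x1 \<and> b = x)" using ne unfolding m3_def addm_def by blast
          then show False using eq False x1 m1sym by blast
        qed
      qed
      moreover have "(a, b) \<noteq> (x, x1)" using ab x1 unfolding m3_def addm_def by auto
      ultimately show "ab \<in> D - {(x, x1)}" using ab unfolding D_def by blast
    qed
    have inD: "(x, x1) \<in> D" using x1 x unfolding D_def cov_def by blast
    have finD: "finite D" using DV finV finite_subset by blast
    have "card {(a, b). m1 a b \<noteq> m3 a b} \<le> card (D - {(x, x1)})"
      using card_mono[OF _ sub] finD by blast
    also have "\<dots> < card D" by (rule card_Diff1_less[OF finD inD])
    finally have lt: "card {(a, b). m1 a b \<noteq> m3 a b} < card D" .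
    have IH: "?R\<^sup>*\<^sup>* (V - cov m1) (V - cov m3)"
      using lt less.hyps[OF _ less.prems(1,2) m3m card3] unfolding D_def by blast
    have T3: "V - cov m3 \<in> ?T" using min_char[OF sg nc] m3m card3 by blast
    have T2: "V - cov m2 \<in> ?T" using min_char[OF sg nc] less.prems(3,4) by blast
    have xV: "x \<in> V" "x2 \<in> V" using x c1 x2c c2 by blast+
    have "skew_TE_adj (V - cov m3) (V - cov m2)"
      unfolding skew_TE_adj_def
      by (rule exI[of _ x2], rule exI[of _ x]) (use cov3 xV x x2c x2x in blast)
    then have "?R (V - cov m3) (V - cov m2)" using T3 T2 by blast
    then show ?thesis using IH by (rule rtranclp.rtrancl_into_rtrancl[rotated])
  qed
qed

theorem theorem5p26:
  fixes V :: "'a set" and E :: "'a \<Rightarrow> 'a \<Rightarrow> bool"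
  assumes "is_tree V E"
  shows "graph_connected (skew_TE_vertices V E) skew_TE_adj"
proof -
  have sg: "simple_graph V E" and nc: "\<nexists>cs. is_cycle V E cs" using assms unfolding is_tree_def by blast+
  obtain m0 where m0: "mtch E m0" "card (cov m0) = mxK V E" using mxK_props(2)[OF sg] by blast
  have ne: "skew_TE_vertices V E \<noteq> {}" using min_char[OF sg nc] m0 by blast
  show ?thesis unfolding graph_connected_def
  proof (intro conjI ne ballI)
    fix X Y assume X: "X \<in> skew_TE_vertices V E" and Y: "Y \<in> skew_TE_vertices V E"
    obtain m1 where m1: "mtch E m1" "card (cov m1) = mxK V E" "X = V - cov m1" using X min_char[OF sg nc] by blast
    obtain m2 where m2: "mtch E m2" "card (cov m2) = mxK V E" "Y = V - cov m2" using Y min_char[OF sg nc] by blast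
    show "(\<lambda>a b. a \<in> skew_TE_vertices V E \<and> b \<in> skew_TE_vertices V E \<and> skew_TE_adj a b)\<^sup>*\<^sup>* X Y"
      using conn_aux[OF sg nc m1(1,2) m2(1,2)] m1(3) m2(3) by simp
  qed
qed

end
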